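(* Let $f\colon(X,\overline p)\to(Y,\overline q)$ be a stratified homotopy equivalence between perverse spaces with $D\overline p=f^*D\overline q$. Then the simplicial map $\mathscr G_{\overline p,\overline q}f\colon\mathscr G_{\overline p}X\to\mathscr G_{\overline q}Y$, $\sigma\mapsto f\circ\sigma$, is a homotopy equivalence.
   Context: Filtered spaces. A filtered space of formal dimension $n$ is a nonempty space $X$ with closed subsets $\emptyset=X_{-1}\subseteq\cdots\subseteq X_{n-1}\subsetneq X_n=X$. Strata are the nonempty connected components of $X_i\setminus X_{i-1}$, with codimension $n-i$. Strata in $X\setminus X_{n-1}$ are regular. Stratified maps and homotopies. A stratified map $f$ sends each stratum $S$ into a stratum $S^f$ with $\operatorname{codim}S^f\le\operatorname{codim}S$. A stratified homotopy between $f$ and $g$ is a stratified map $X\times[0,1]\to Y$ restricting to $f$ and $g$, where $X\times[0,1]$ is filtered by $X_i\times[0,1]$. We write $f\simeq_s g$. Stratified homotopy equivalences. A stratified homotopy equivalence is a stratified map $f\colon X\to Y$ for which there exists a stratified map $g\colon Y\to X$ such that: - $g\circ f\simeq_s\mathrm{id}_X$ and $f\circ g\simeq_s\mathrm{id}_Y$; - $\operatorname{codim}S=\operatorname{codim}S^f$ for all strata $S$ of $X$, and $\operatorname{codim}T=\operatorname{codim}T^g$ for all strata $T$ of $Y$. Perversities. A perversity is a map $\overline p$ from strata to $\mathbb Z\cup\{\pm\infty\}$ vanishing on regular strata. The top perversity is $\overline t(S)=\operatorname{codim}S-2$, and $D\overline p=\overline t-\overline p$. The pullback perversity is $f^*\overline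 q(S)=\overline q(S^f)$. Full simplices and the Gajer space. A simplex $\sigma\colon\Delta^j\to X$ is $\overline p$-allowable if $\dim\sigma^{-1}S\le j-\operatorname{codim}S+\overline p(S)$ for all singular strata. Here $\dim$ is polyhedral dimension, with $\dim\emptyset=-\infty$. A simplex is $\overline p$-full if it and all its iterated faces are allowable. $\mathscr G_{\overline p}X\subseteq\mathrm{Sing}\,X$ consists of the $\overline p$-full simplices. *)

theory Defs
  imports "HOL-Analysis.Analysis" "HOL-Homology.Homology" "HOL-Library.Extended_Real"
begin

text \<open>A filtered space: topology, formal dimension n, and closed subsets
  X_{-1} \<subseteq> X_0 \<subseteq> ... \<subseteq> X_n (indexed by integers -1..n; other indices unused).\<close>

record 'a filtered_space =
  ftop :: "'a topology"
  fdim :: nat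
  fil  :: "int \<Rightarrow> 'a set"

definition filtered_space :: "'a filtered_space \<Rightarrow> bool" where
  "filtered_space X \<longleftrightarrow>
     topspace (ftop X) \<noteq> {} \<and>
     (\<forall>i. -1 \<le> i \<and> i \<le> int (fdim X) \<longrightarrow> closedin (ftop X) (fil X i)) \<and>
     fil X (-1) = {} \<and>
     (\<forall>i. -1 \<le> i \<and> i < int (fdim X) \<longrightarrow> fil X i \<subseteq> fil X (i + 1)) \<and>
     fil X (int (fdim X) - 1) \<subset> fil X (int (fdim X)) \<and>
     fil X (int (fdim X)) = topspace (ftop X)"

definition stratum :: "'a filtered_space \<Rightarrow> 'a set \<Rightarrow> bool" where
  "stratum X S \<longleftrightarrow>
     (\<exists>i. 0 \<le> i \<and> i \<le> int (fdim X) \<and>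
          S \<in> connected_components_of (subtopology (ftop X) (fil X i - fil X (i - 1))))"

definition stratum_level :: "'a filtered_space \<Rightarrow> 'a set \<Rightarrow> int" where
  "stratum_level X S = (THE i. 0 \<le> i \<and> i \<le> int (fdim X) \<and>
      S \<in> connected_components_of (subtopology (ftop X) (fil X i - fil X (i - 1))))"

definition codim :: "'a filtered_space \<Rightarrow> 'a set \<Rightarrow> int" where
  "codim X S = int (fdim X) - stratum_level X S"

definition target_stratum :: "'b filtered_space \<Rightarrow> ('a \<Rightarrow> 'b) \<Rightarrow> 'a set \<Rightarrow> 'b set" where
  "target_stratum Y f S = (THE T. stratum Y T \<and> f ` S \<subseteq> T)"

definition stratified_map :: "'a filtered_space \<Rightarrow> 'b filtered_space \<Rightarrow> ('a \<Rightarrow> 'b) \<Rightarrow> bool" where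
  "stratified_map X Y f \<longleftrightarrow>
     continuous_map (ftop X) (ftop Y) f \<and>
     (\<forall>S. stratum X S \<longrightarrow>
        (\<exists>T. stratum Y T \<and> f ` S \<subseteq> T \<and> codim Y T \<le> codim X S))"

definition cylinder :: "'a filtered_space \<Rightarrow> ('a \<times> real) filtered_space" where
  "cylinder X = \<lparr> ftop = prod_topology (ftop X) (top_of_set {0..1}),
                  fdim = fdim X,
                  fil = (\<lambda>i. fil X i \<times> {0..1}) \<rparr>"

definition stratified_homotopic ::
  "'a filtered_space \<Rightarrow> 'b filtered_space \<Rightarrow> ('a \<Rightarrow> 'b) \<Rightarrow> ('a \<Rightarrow> 'b) \<Rightarrow> bool" where
  "stratified_homotopic X Y f g \<longleftrightarrow>
     (\<exists>h. stratified_map (cylinder X) Y h \<and>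
          (\<forall>x\<in>topspace (ftop X). h (x, 0) = f x \<and> h (x, 1) = g x))"

definition stratified_homotopy_equivalence ::
  "'a filtered_space \<Rightarrow> 'b filtered_space \<Rightarrow> ('a \<Rightarrow> 'b) \<Rightarrow> bool" where
  "stratified_homotopy_equivalence X Y f \<longleftrightarrow>
     stratified_map X Y f \<and>
     (\<exists>g. stratified_map Y X g \<and>
          stratified_homotopic X X (g \<circ> f) id \<and>
          stratified_homotopic Y Y (f \<circ> g) id \<and>
          (\<forall>S. stratum X S \<longrightarrow> codim X S = codim Y (target_stratum Y f S)) \<and>
          (\<forall>T. stratum Y T \<longrightarrow> codim Y T = codim X (target_stratum X g T)))"

text \<open>Perversities take values in \<int> \<union> {\<plusminus>\<infinity>}, modelled in ereal; only values on strata matter.\<close>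

definition perversity :: "'a filtered_space \<Rightarrow> ('a set \<Rightarrow> ereal) \<Rightarrow> bool" where
  "perversity X p \<longleftrightarrow>
     (\<forall>S. stratum X S \<longrightarrow>
        (p S \<in> range (\<lambda>k::int. ereal (real_of_int k)) \<union> {\<infinity>, -\<infinity>}) \<and>
        (codim X S = 0 \<longrightarrow> p S = 0))"

definition top_perversity :: "'a filtered_space \<Rightarrow> 'a set \<Rightarrow> ereal" where
  "top_perversity X S = ereal (real_of_int (codim X S - 2))"

definition dual_perversity :: "'a filtered_space \<Rightarrow> ('a set \<Rightarrow> ereal) \<Rightarrow> 'a set \<Rightarrow> ereal" where
  "dual_perversity X p S = top_perversity X S - p S"

definition pullback_perversity ::
  "'b filtered_space \<Rightarrow> ('a \<Rightarrow> 'b) \<Rightarrow> ('b set \<Rightarrow> ereal) \<Rightarrow> 'a set \<Rightarrow> ereal" where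
  "pullback_perversity Y f q S = q (target_stratum Y f S)"

text \<open>dim A \<le> b (polyhedral dimension): A is empty (dim \<emptyset> = -\<infinity>), or A is contained in a
  polyhedron of dimension \<le> b, i.e. a finite union of geometric simplices
  (convex hulls of affinely independent finite sets) each of dimension \<le> b.\<close>

text \<open>Points of \<Delta>^j live in nat \<Rightarrow> real (coordinatewise linear structure), which is not a
  real_vector instance, so affine independence and convex hulls of finite point sets are
  written out explicitly.\<close>

definition aff_indep_fin :: "(nat \<Rightarrow> real) set \<Rightarrow> bool" where
  "aff_indep_fin T \<longleftrightarrow> finite T \<and>
     (\<forall>u. (\<Sum>v\<in>T. u v) = 0 \<and> (\<forall>i. (\<Sum>v\<in>T. u v * v i) = 0) \<longrightarrow> (\<forall>v\<in>T. u v = 0))"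

definition conv_hull_fin :: "(nat \<Rightarrow> real) set \<Rightarrow> (nat \<Rightarrow> real) set" where
  "conv_hull_fin T = {x. \<exists>u. (\<forall>v\<in>T. 0 \<le> u v) \<and> (\<Sum>v\<in>T. u v) = 1 \<and>
                          x = (\<lambda>i. \<Sum>v\<in>T. u v * v i)}"

definition pdim_le :: "(nat \<Rightarrow> real) set \<Rightarrow> ereal \<Rightarrow> bool" where
  "pdim_le A b \<longleftrightarrow> A = {} \<or>
     (\<exists>\<T>. finite \<T> \<and>
          (\<forall>T\<in>\<T>. aff_indep_fin T \<and> ereal (real (card T)) - 1 \<le> b) \<and>
          A \<subseteq> \<Union> (conv_hull_fin ` \<T>))"

definition allowable ::
  "'a filtered_space \<Rightarrow> ('a set \<Rightarrow> ereal) \<Rightarrow> nat \<Rightarrow> ((nat \<Rightarrow> real) \<Rightarrow> 'a) \<Rightarrow> bool" where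
  "allowable X p j \<sigma> \<longleftrightarrow>
     (\<forall>S. stratum X S \<and> codim X S > 0 \<longrightarrow>
        pdim_le {t \<in> standard_simplex j. \<sigma> t \<in> S}
                (ereal (real_of_int (int j - codim X S)) + p S))"

fun full ::
  "'a filtered_space \<Rightarrow> ('a set \<Rightarrow> ereal) \<Rightarrow> nat \<Rightarrow> ((nat \<Rightarrow> real) \<Rightarrow> 'a) \<Rightarrow> bool" where
  "full X p 0 \<sigma> = allowable X p 0 \<sigma>"
| "full X p (Suc j) \<sigma> =
     (allowable X p (Suc j) \<sigma> \<and> (\<forall>k\<le>Suc j. full X p j (singular_face (Suc j) k \<sigma>)))"

definition gajer :: "'a filtered_space \<Rightarrow> ('a set \<Rightarrow> ereal) \<Rightarrow> nat \<Rightarrow> ((nat \<Rightarrow> real) \<Rightarrow> 'a) set" where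
  "gajer X p j = {\<sigma>. singular_simplex j (ftop X) \<sigma> \<and> full X p j \<sigma>}"

definition gajer_map :: "('a \<Rightarrow> 'b) \<Rightarrow> nat \<Rightarrow> ((nat \<Rightarrow> real) \<Rightarrow> 'a) \<Rightarrow> ((nat \<Rightarrow> real) \<Rightarrow> 'b)" where
  "gajer_map f j \<sigma> = simplex_map j f \<sigma>"

text \<open>Simplicial operators \<theta> : [m] \<rightarrow> [n] (monotone maps), acting on Sing by precomposition with
  the induced affine map \<Delta>^m \<rightarrow> \<Delta>^n.\<close>

definition simp_op :: "nat \<Rightarrow> nat \<Rightarrow> (nat \<Rightarrow> nat) \<Rightarrow> bool" where
  "simp_op m n \<theta> \<longleftrightarrow> (\<forall>i\<le>m. \<theta> i \<le> n) \<and> (\<forall>i k. i \<le> k \<and> k \<le> m \<longrightarrow> \<theta> i \<le> \<theta> k)"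

definition simp_op_map :: "nat \<Rightarrow> (nat \<Rightarrow> nat) \<Rightarrow> (nat \<Rightarrow> real) \<Rightarrow> (nat \<Rightarrow> real)" where
  "simp_op_map m \<theta> t = (\<lambda>i. \<Sum>k\<in>{k. k \<le> m \<and> \<theta> k = i}. t k)"

definition sop_act :: "nat \<Rightarrow> (nat \<Rightarrow> nat) \<Rightarrow> ((nat \<Rightarrow> real) \<Rightarrow> 'a) \<Rightarrow> ((nat \<Rightarrow> real) \<Rightarrow> 'a)" where
  "sop_act m \<theta> \<sigma> = restrict (\<sigma> \<circ> simp_op_map m \<theta>) (standard_simplex m)"

type_synonym 'a ssub = "nat \<Rightarrow> ((nat \<Rightarrow> real) \<Rightarrow> 'a) set"
type_synonym ('a, 'b) smap = "nat \<Rightarrow> ((nat \<Rightarrow> real) \<Rightarrow> 'a) \<Rightarrow> ((nat \<Rightarrow> real) \<Rightarrow> 'b)"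

definition simplicial_map :: "'a ssub \<Rightarrow> 'b ssub \<Rightarrow> ('a, 'b) smap \<Rightarrow> bool" where
  "simplicial_map K L \<phi> \<longleftrightarrow>
     (\<forall>n \<sigma>. \<sigma> \<in> K n \<longrightarrow> \<phi> n \<sigma> \<in> L n) \<and>
     (\<forall>m n \<theta> \<sigma>. simp_op m n \<theta> \<and> \<sigma> \<in> K n \<longrightarrow> \<phi> m (sop_act m \<theta> \<sigma>) = sop_act m \<theta> (\<phi> n \<sigma>))"

text \<open>An elementary simplicial homotopy K \<times> \<Delta>[1] \<rightarrow> L from \<phi> to \<psi>: the n-simplices of
  \<Delta>[1] are the monotone maps \<alpha> : [n] \<rightarrow> [1].\<close>

definition elem_simplicial_homotopy ::
  "'a ssub \<Rightarrow> 'b ssub \<Rightarrow> ('a, 'b) smap \<Rightarrow> ('a, 'b) smap \<Rightarrow> bool" where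
  "elem_simplicial_homotopy K L \<phi> \<psi> \<longleftrightarrow>
     (\<exists>H :: nat \<Rightarrow> ((nat \<Rightarrow> real) \<Rightarrow> 'a) \<Rightarrow> (nat \<Rightarrow> nat) \<Rightarrow> ((nat \<Rightarrow> real) \<Rightarrow> 'b).
        (\<forall>n \<sigma> \<alpha>. \<sigma> \<in> K n \<and> simp_op n 1 \<alpha> \<longrightarrow> H n \<sigma> \<alpha> \<in> L n) \<and>
        (\<forall>n \<sigma> \<alpha> \<beta>. \<sigma> \<in> K n \<and> (\<forall>i\<le>n. \<alpha> i = \<beta> i) \<longrightarrow> H n \<sigma> \<alpha> = H n \<sigma> \<beta>) \<and>
        (\<forall>m n \<theta> \<sigma> \<alpha>. simp_op m n \<theta> \<and> simp_op n 1 \<alpha> \<and> \<sigma> \<in> K n \<longrightarrow>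
            H m (sop_act m \<theta> \<sigma>) (\<alpha> \<circ> \<theta>) = sop_act m \<theta> (H n \<sigma> \<alpha>)) \<and>
        (\<forall>n \<sigma>. \<sigma> \<in> K n \<longrightarrow> H n \<sigma> (\<lambda>_. 0) = \<phi> n \<sigma> \<and> H n \<sigma> (\<lambda>_. 1) = \<psi> n \<sigma>))"

inductive simplicially_homotopic :: "'a ssub \<Rightarrow> 'b ssub \<Rightarrow> ('a, 'b) smap \<Rightarrow> ('a, 'b) smap \<Rightarrow> bool"
  for K L where
  elem: "elem_simplicial_homotopy K L \<phi> \<psi> \<Longrightarrow> simplicially_homotopic K L \<phi> \<psi>"
| refl: "simplicially_homotopic K L \<phi> \<phi>"
| sym: "simplicially_homotopic K L \<phi> \<psi> \<Longrightarrow> simplicially_homotopic K L \<psi> \<phi>"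
| trans: "simplicially_homotopic K L \<phi> \<psi> \<Longrightarrow> simplicially_homotopic K L \<psi> \<rho> \<Longrightarrow>
          simplicially_homotopic K L \<phi> \<rho>"

definition simplicial_homotopy_equivalence :: "'a ssub \<Rightarrow> 'b ssub \<Rightarrow> ('a, 'b) smap \<Rightarrow> bool" where
  "simplicial_homotopy_equivalence K L \<phi> \<longleftrightarrow>
     simplicial_map K L \<phi> \<and>
     (\<exists>\<psi>. simplicial_map L K \<psi> \<and>
          simplicially_homotopic K K (\<lambda>n \<sigma>. \<psi> n (\<phi> n \<sigma>)) (\<lambda>n \<sigma>. \<sigma>) \<and>
          simplicially_homotopic L L (\<lambda>n \<sigma>. \<phi> n (\<psi> n \<sigma>)) (\<lambda>n \<sigma>. \<sigma>))"

end

theory Submission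
  imports Defs
begin

lemma fil_mono_step:
  assumes "filtered_space X" "-1 \<le> i" "0 \<le> d" "i + d \<le> int (fdim X)"
  shows "fil X i \<subseteq> fil X (i + d)"
  using assms(3,4)
proof (induction d rule: int_ge_induct)
  case base then show ?case by simp
next
  case (step k)
  have "fil X (i + k) \<subseteq> fil X (i + k + 1)"
    using assms(1,2) step by (auto simp: filtered_space_def)
  then show ?case using step by (simp add: add.assoc)
qed

lemma fil_mono:
  assumes "filtered_space X" "-1 \<le> i" "i \<le> j" "j \<le> int (fdim X)"
  shows "fil X i \<subseteq> fil X j"
  using fil_mono_step[OF assms(1,2), of "j - i"] assms by simp

lemma fil_top:
  assumes "filtered_space X" "-1 \<le> i" "i \<le> int (fdim X)"
  shows "fil X i \<subseteq> topspace (ftop X)"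
  using fil_mono[OF assms(1,2,3)] assms(1) by (auto simp: filtered_space_def)

lemma stratum_sub:
  assumes "stratum X S" shows "S \<subseteq> topspace (ftop X)" "S \<noteq> {}"
  using assms connected_components_of_subset nonempty_connected_components_of
  unfolding stratum_def by fastforce+

lemma stratum_disjoint:
  assumes X: "filtered_space X" and S: "stratum X S" and T: "stratum X T"
    and x: "x \<in> S" "x \<in> T"
  shows "S = T"
proof -
  obtain i where i: "0 \<le> i" "i \<le> int (fdim X)"
    "S \<in> connected_components_of (subtopology (ftop X) (fil X i - fil X (i - 1)))"
    using S by (auto simp: stratum_def)
  obtain j where j: "0 \<le> j" "j \<le> int (fdim X)"
    "T \<in> connected_components_of (subtopology (ftop X) (fil X j - fil X (j - 1)))"
    using T by (auto simp: stratum_def)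
  have xi: "x \<in> fil X i - fil X (i - 1)"
    using connected_components_of_subset[OF i(3)] x by auto
  have xj: "x \<in> fil X j - fil X (j - 1)"
    using connected_components_of_subset[OF j(3)] x by auto
  have "i = j"
  proof (rule ccontr)
    assume "i \<noteq> j"
    then consider "i < j" | "j < i" by linarith
    then show False
    proof cases
      case 1
      then have "fil X i \<subseteq> fil X (j - 1)" using fil_mono[OF X, of i "j - 1"] i j by simp
      then show False using xi xj by auto
    next
      case 2
      then have "fil X j \<subseteq> fil X (i - 1)" using fil_mono[OF X, of j "i - 1"] i j by simp
      then show False using xi xj by auto
    qed
  qed
  then show ?thesis using connected_components_of_overlap i(3) j(3) x by blast
qed

lemma stratum_cover:
  assumes X: "filtered_space X" and x: "x \<in> topspace (ftop X)"
  shows "\<exists>S. stratum X S \<and> x \<in> S"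
proof -
  define i where "i = (LEAST k::nat. x \<in> fil X (int k))"
  have ex: "x \<in> fil X (int (fdim X))" using X x by (auto simp: filtered_space_def)
  then have xi: "x \<in> fil X (int i)" unfolding i_def by (rule LeastI)
  have ile: "i \<le> fdim X" unfolding i_def using ex by (rule Least_le)
  have notin: "x \<notin> fil X (int i - 1)"
  proof (cases i)
    case 0 then show ?thesis using X by (auto simp: filtered_space_def)
  next
    case (Suc m)
    have "x \<notin> fil X (int m)" using not_less_Least[of m "\<lambda>k. x \<in> fil X (int k)"] Suc i_def by auto
    then show ?thesis using Suc by simp
  qed
  let ?W = "subtopology (ftop X) (fil X (int i) - fil X (int i - 1))"
  have xW: "x \<in> topspace ?W" using x xi notin by simp
  have C: "connected_component_of_set ?W x \<in> connected_components_of ?W"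
    using xW connected_component_in_connected_components_of by metis
  have xC: "x \<in> connected_component_of_set ?W x"
    using xW connected_component_of_refl by (metis mem_Collect_eq)
  have "stratum X (connected_component_of_set ?W x)"
    unfolding stratum_def
    apply (rule exI[of _ "int i"])
    using C ile by simp
  then show ?thesis using xC by blast
qed

lemma target_stratum_eq:
  assumes Y: "filtered_space Y" and S: "stratum X S" and T: "stratum Y T" and sub: "f ` S \<subseteq> T"
  shows "target_stratum Y f S = T"
  unfolding target_stratum_def
proof (rule the_equality)
  show "stratum Y T \<and> f ` S \<subseteq> T" using T sub by auto
next
  fix T' assume "stratum Y T' \<and> f ` S \<subseteq> T'"
  moreover obtain x where "x \<in> S" using stratum_sub(2)[OF S] by auto
  ultimately show "T' = T" using stratum_disjoint[OF Y, of T' T "f x"] T sub by auto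
qed

lemma target_stratum_props:
  assumes Y: "filtered_space Y" and f: "stratified_map X Y f" and S: "stratum X S"
  shows "stratum Y (target_stratum Y f S)" "f ` S \<subseteq> target_stratum Y f S"
    "codim Y (target_stratum Y f S) \<le> codim X S"
proof -
  obtain T where T: "stratum Y T" "f ` S \<subseteq> T" "codim Y T \<le> codim X S"
    using f S by (auto simp: stratified_map_def)
  then have "target_stratum Y f S = T" using target_stratum_eq[OF Y S] by auto
  then show "stratum Y (target_stratum Y f S)" "f ` S \<subseteq> target_stratum Y f S"
    "codim Y (target_stratum Y f S) \<le> codim X S" using T by auto
qed

lemma homotopy_stays:
  assumes X: "filtered_space X" and h: "stratified_map (cylinder X) X h"
    and h1: "\<forall>x\<in>topspace (ftop X). h (x, 1) = x"
    and S: "stratum X S" and x: "x \<in> S" and s: "s \<in> {0..1}"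
  shows "h (x, s) \<in> S"
proof -
  obtain i where i: "0 \<le> i" "i \<le> int (fdim X)"
    "S \<in> connected_components_of (subtopology (ftop X) (fil X i - fil X (i - 1)))"
    using S by (auto simp: stratum_def)
  let ?W = "subtopology (ftop (cylinder X)) (fil (cylinder X) i - fil (cylinder X) (i - 1))"
  have Wsp: "?W = subtopology (prod_topology (ftop X) (top_of_set {0..1}))
        (fil X i \<times> {0..1} - fil X (i - 1) \<times> {0..1})"
    by (simp add: cylinder_def)
  have Ssub: "S \<subseteq> fil X i - fil X (i - 1)" "S \<subseteq> topspace (ftop X)"
    using connected_components_of_subset[OF i(3)] by auto
  have Sc: "connectedin (ftop X) S"
    using connectedin_connected_components_of[OF i(3)] connectedin_subtopology by blast
  have Ic: "connectedin (top_of_set {0..1::real}) {0..1}"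
    by (simp add: connectedin_subtopology)
  have SIc: "connectedin ?W (S \<times> {0..1})"
    unfolding Wsp connectedin_subtopology using Sc Ic Ssub
    by (auto simp: connectedin_Times)
  have x1: "(x, 1::real) \<in> S \<times> {0..1}" using x by auto
  define C where "C = connected_component_of_set ?W (x, 1)"
  have SIC: "S \<times> {0..1} \<subseteq> C" unfolding C_def
    by (rule connected_component_of_maximal[OF SIc x1])
  have x1W: "(x, 1) \<in> topspace ?W"
    using connectedin_subset_topspace[OF SIc] x1 by blast
  have Ccc: "C \<in> connected_components_of ?W"
    unfolding C_def using x1W connected_component_in_connected_components_of by metis
  have fd: "fdim (cylinder X) = fdim X" by (simp add: cylinder_def)
  have "stratum (cylinder X) C" unfolding stratum_def fd
    apply (rule exI[of _ i])
    using i(1,2) Ccc by simp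
  then obtain T where T: "stratum X T" "h ` C \<subseteq> T"
    using h unfolding stratified_map_def by blast
  have "h (x, 1) \<in> T" using T SIC x1 by blast
  then have "x \<in> T" using h1 Ssub x by auto
  then have "T = S" using stratum_disjoint[OF X T(1) S] x by auto
  then show ?thesis using T SIC x s by blast
qed


lemma pdim_le_mono:
  assumes "pdim_le A b" "B \<subseteq> A" "b \<le> c"
  shows "pdim_le B c"
proof (cases "A = {}")
  case True then show ?thesis using assms by (simp add: pdim_le_def)
next
  case False
  then obtain \<T> where T: "finite \<T>" "\<forall>T\<in>\<T>. aff_indep_fin T \<and> ereal (real (card T)) - 1 \<le> b"
    "A \<subseteq> \<Union> (conv_hull_fin ` \<T>)" using assms(1) by (auto simp: pdim_le_def)
  then show ?thesis unfolding pdim_le_def using assms(2,3)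
    by (intro disjI2 exI[of _ \<T>]) (auto intro: order_trans)
qed

definition good_F :: "'a filtered_space \<Rightarrow> ('a set \<Rightarrow> ereal) \<Rightarrow> 'b filtered_space \<Rightarrow> ('b set \<Rightarrow> ereal)
   \<Rightarrow> ('b set \<Rightarrow> 'a set) \<Rightarrow> bool" where
  "good_F X p Y q F \<longleftrightarrow> (\<forall>T. stratum Y T \<and> codim Y T > 0 \<longrightarrow>
      stratum X (F T) \<and> codim X (F T) = codim Y T \<and> p (F T) \<le> q T)"

lemma allowable_transfer:
  assumes F: "good_F X p Y q F" and a: "allowable X p n \<sigma>"
    and st: "\<forall>t\<in>standard_simplex n. \<forall>T. stratum Y T \<and> codim Y T > 0 \<and> \<tau> t \<in> T \<longrightarrow> \<sigma> t \<in> F T"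
  shows "allowable Y q n \<tau>"
  unfolding allowable_def
proof (intro allI impI)
  fix T assume T: "stratum Y T \<and> 0 < codim Y T"
  then have FT: "stratum X (F T)" "codim X (F T) = codim Y T" "p (F T) \<le> q T"
    using F by (auto simp: good_F_def)
  have "pdim_le {t \<in> standard_simplex n. \<sigma> t \<in> F T}
        (ereal (real_of_int (int n - codim X (F T))) + p (F T))"
    using a FT T by (auto simp: allowable_def)
  moreover have "{t \<in> standard_simplex n. \<tau> t \<in> T} \<subseteq> {t \<in> standard_simplex n. \<sigma> t \<in> F T}"
    using st T by auto
  moreover have "ereal (real_of_int (int n - codim X (F T))) + p (F T) \<le>
       ereal (real_of_int (int n - codim Y T)) + q T"
    using FT by (simp add: add_left_mono)
  ultimately show "pdim_le {t \<in> standard_simplex n. \<tau> t \<in> T}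
        (ereal (real_of_int (int n - codim Y T)) + q T)"
    by (rule pdim_le_mono)
qed

lemma full_transfer:
  assumes F: "good_F X p Y q F"
  shows "\<forall>t\<in>standard_simplex n. \<forall>T. stratum Y T \<and> codim Y T > 0 \<and> \<tau> t \<in> T \<longrightarrow> \<sigma> t \<in> F T
     \<Longrightarrow> full X p n \<sigma> \<Longrightarrow> full Y q n \<tau>"
proof (induction n arbitrary: \<sigma> \<tau>)
  case 0
  then show ?case using allowable_transfer[OF F] by simp
next
  case (Suc j)
  have al: "allowable Y q (Suc j) \<tau>"
    using allowable_transfer[OF F, of "Suc j" \<sigma> \<tau>] Suc.prems by simp
  have "full Y q j (singular_face (Suc j) k \<tau>)" if k: "k \<le> Suc j" for k
  proof (rule Suc.IH)
    show "full X p j (singular_face (Suc j) k \<sigma>)" using Suc.prems k by simp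
    show "\<forall>t\<in>standard_simplex j. \<forall>T. stratum Y T \<and> 0 < codim Y T \<and> singular_face (Suc j) k \<tau> t \<in> T \<longrightarrow>
        singular_face (Suc j) k \<sigma> t \<in> F T"
    proof (intro ballI allI impI)
      fix t T assume t: "t \<in> standard_simplex j"
        and T: "stratum Y T \<and> 0 < codim Y T \<and> singular_face (Suc j) k \<tau> t \<in> T"
      have ft: "simplical_face k t \<in> standard_simplex (Suc j)"
        using simplical_face_in_standard_simplex[of "Suc j" k t] k t by simp
      have "\<tau> (simplical_face k t) \<in> T" using T t by (simp add: singular_face_def)
      then have "\<sigma> (simplical_face k t) \<in> F T" using Suc.prems(1) ft T by blast
      then show "singular_face (Suc j) k \<sigma> t \<in> F T" using t by (simp add: singular_face_def)
    qed
  qed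
  then show ?case using al by simp
qed


lemma simp_op_map_in:
  assumes th: "simp_op m n \<theta>" and t: "t \<in> standard_simplex m"
  shows "simp_op_map m \<theta> t \<in> standard_simplex n"
proof -
  have t0: "\<And>i. 0 \<le> t i" and t1: "sum t {..m} = 1" using t by (auto simp: standard_simplex_def)
  have thn: "\<And>k. k \<le> m \<Longrightarrow> \<theta> k \<le> n" using th by (auto simp: simp_op_def)
  have nn: "0 \<le> simp_op_map m \<theta> t i" for i
    unfolding simp_op_map_def by (auto intro: sum_nonneg t0)
  have le1: "simp_op_map m \<theta> t i \<le> 1" for i
  proof -
    have "simp_op_map m \<theta> t i \<le> sum t {..m}"
      unfolding simp_op_map_def by (rule sum_mono2) (auto intro: t0)
    then show ?thesis using t1 by simp
  qed
  have z: "simp_op_map m \<theta> t i = 0" if "i > n" for i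
  proof -
    have E: "{k. k \<le> m \<and> \<theta> k = i} = {}" using thn that by force
    show ?thesis unfolding simp_op_map_def by (subst E) simp
  qed
  have "(\<Sum>i\<le>n. simp_op_map m \<theta> t i) = sum t {..m}"
    unfolding simp_op_map_def
    using sum.group[of "{..m}" "{..n}" \<theta> t] thn by (auto simp: atMost_def)
  then show ?thesis using nn le1 z t1 by (auto simp: standard_simplex_def)
qed

definition amap :: "nat \<Rightarrow> (nat \<Rightarrow> nat) \<Rightarrow> (nat \<Rightarrow> real) \<Rightarrow> real" where
  "amap n \<alpha> t = (\<Sum>k\<in>{k. k \<le> n \<and> \<alpha> k = 1}. t k)"

lemma amap_in:
  assumes t: "t \<in> standard_simplex n"
  shows "amap n \<alpha> t \<in> {0..1}"
proof -
  have t0: "\<And>i. 0 \<le> t i" and t1: "sum t {..n} = 1" using t by (auto simp: standard_simplex_def)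
  have "amap n \<alpha> t \<le> sum t {..n}"
    unfolding amap_def by (rule sum_mono2) (auto intro: t0)
  moreover have "0 \<le> amap n \<alpha> t" unfolding amap_def by (auto intro: sum_nonneg t0)
  ultimately show ?thesis using t1 by simp
qed

lemma amap_0: "amap n (\<lambda>_. 0) t = 0" by (simp add: amap_def)

lemma amap_1: assumes "t \<in> standard_simplex n" shows "amap n (\<lambda>_. 1) t = 1"
  using assms by (simp add: amap_def standard_simplex_def atMost_def)

lemma amap_cong: "(\<forall>i\<le>n. \<alpha> i = \<beta> i) \<Longrightarrow> amap n \<alpha> t = amap n \<beta> t"
  unfolding amap_def by (rule sum.cong) auto

lemma amap_comp:
  assumes th: "simp_op m n \<theta>"
  shows "amap m (\<alpha> \<circ> \<theta>) t = amap n \<alpha> (simp_op_map m \<theta> t)"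
proof -
  have thn: "\<And>k. k \<le> m \<Longrightarrow> \<theta> k \<le> n" using th by (auto simp: simp_op_def)
  have "amap n \<alpha> (simp_op_map m \<theta> t) =
     (\<Sum>i\<in>{i. i \<le> n \<and> \<alpha> i = 1}. sum t {k. k \<in> {k. k \<le> m \<and> \<alpha> (\<theta> k) = 1} \<and> \<theta> k = i})"
    unfolding amap_def simp_op_map_def
    by (rule sum.cong) (auto intro!: sum.cong)
  also have "\<dots> = sum t {k. k \<le> m \<and> \<alpha> (\<theta> k) = 1}"
    by (rule sum.group) (auto simp: thn)
  finally show ?thesis by (simp add: amap_def)
qed

lemma amap_cont: "continuous_map (subtopology (powertop_real UNIV) (standard_simplex n))
   (top_of_set {0..1}) (amap n \<alpha>)"
proof -
  have "continuous_map (subtopology (powertop_real UNIV) (standard_simplex n)) euclideanreal (amap n \<alpha>)"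
    unfolding amap_def
    by (intro continuous_map_sum continuous_map_from_subtopology continuous_map_product_projection) auto
  moreover have "amap n \<alpha> \<in> standard_simplex n \<rightarrow> {0..1}" using amap_in by blast
  ultimately show ?thesis
    by (simp add: continuous_map_in_subtopology)
qed


lemma gajer_pt:
  assumes "\<sigma> \<in> gajer X p n" "t \<in> standard_simplex n"
  shows "\<sigma> t \<in> topspace (ftop X)"
  using assms unfolding gajer_def singular_simplex_def continuous_map_def by auto

lemma gajer_ext:
  assumes "\<sigma> \<in> gajer X p n" "t \<notin> standard_simplex n"
  shows "\<sigma> t = undefined"
  using assms unfolding gajer_def singular_simplex_def extensional_def by auto

lemma sop_map_comm:
  assumes "simp_op m n \<theta>"
  shows "simplex_map m f (sop_act m \<theta> \<sigma>) = sop_act m \<theta> (simplex_map n f \<sigma>)"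
proof
  fix t show "simplex_map m f (sop_act m \<theta> \<sigma>) t = sop_act m \<theta> (simplex_map n f \<sigma>) t"
    using simp_op_map_in[OF assms, of t]
    by (simp add: simplex_map_def sop_act_def)
qed

lemma gajer_map_simplicial:
  assumes fc: "continuous_map (ftop X) (ftop Y) f" and F: "good_F X p Y q F"
    and pw: "\<forall>x\<in>topspace (ftop X). \<forall>T. stratum Y T \<and> codim Y T > 0 \<and> f x \<in> T \<longrightarrow> x \<in> F T"
  shows "simplicial_map (gajer X p) (gajer Y q) (gajer_map f)"
  unfolding simplicial_map_def
proof (intro conjI allI impI)
  fix n \<sigma> assume s: "\<sigma> \<in> gajer X p n"
  have ss: "singular_simplex n (ftop Y) (gajer_map f n \<sigma>)"
    using s fc singular_simplex_simplex_map by (auto simp: gajer_def gajer_map_def)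
  have "full Y q n (gajer_map f n \<sigma>)"
  proof (rule full_transfer[OF F])
    show "full X p n \<sigma>" using s by (simp add: gajer_def)
    show "\<forall>t\<in>standard_simplex n. \<forall>T. stratum Y T \<and> 0 < codim Y T \<and> gajer_map f n \<sigma> t \<in> T \<longrightarrow> \<sigma> t \<in> F T"
      using pw gajer_pt[OF s] by (simp add: gajer_map_def simplex_map_def)
  qed
  then show "gajer_map f n \<sigma> \<in> gajer Y q n" using ss by (simp add: gajer_def)
next
  fix m n \<theta> \<sigma> assume "simp_op m n \<theta> \<and> \<sigma> \<in> gajer X p n"
  then show "gajer_map f m (sop_act m \<theta> \<sigma>) = sop_act m \<theta> (gajer_map f n \<sigma>)"
    by (simp add: gajer_map_def sop_map_comm)
qed

lemma homotopy_elem: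
  assumes X: "filtered_space X" and h: "stratified_map (cylinder X) X h"
    and h0: "\<forall>x\<in>topspace (ftop X). h (x, 0) = k x"
    and h1: "\<forall>x\<in>topspace (ftop X). h (x, 1) = x"
    and \<Phi>: "\<forall>n \<sigma>. \<sigma> \<in> gajer X p n \<longrightarrow> \<Phi> n \<sigma> = restrict (k \<circ> \<sigma>) (standard_simplex n)"
  shows "elem_simplicial_homotopy (gajer X p) (gajer X p) \<Phi> (\<lambda>n \<sigma>. \<sigma>)"
  unfolding elem_simplicial_homotopy_def
proof (intro exI[of _ "\<lambda>n \<sigma> \<alpha>. restrict (\<lambda>t. h (\<sigma> t, amap n \<alpha> t)) (standard_simplex n)"] conjI allI impI)
  have hc: "continuous_map (prod_topology (ftop X) (top_of_set {0..1})) (ftop X) h"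
    using h by (simp add: stratified_map_def cylinder_def)
  fix n \<sigma> \<alpha> assume a: "\<sigma> \<in> gajer X p n \<and> simp_op n 1 \<alpha>"
  then have s: "\<sigma> \<in> gajer X p n" by simp
  let ?H = "restrict (\<lambda>t. h (\<sigma> t, amap n \<alpha> t)) (standard_simplex n)"
  have sc: "continuous_map (subtopology (powertop_real UNIV) (standard_simplex n)) (ftop X) \<sigma>"
    using s by (simp add: gajer_def singular_simplex_def)
  have c1: "continuous_map (subtopology (powertop_real UNIV) (standard_simplex n)) (ftop X)
      (\<lambda>t. h (\<sigma> t, amap n \<alpha> t))"
    using continuous_map_compose[OF continuous_map_pairedI[OF sc amap_cont] hc]
    by (simp add: o_def)
  have "continuous_map (subtopology (powertop_real UNIV) (standard_simplex n)) (ftop X) ?H"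
    by (rule continuous_map_eq[OF c1]) simp
  then have ss: "singular_simplex n (ftop X) ?H" by (simp add: singular_simplex_def)
  have gF: "good_F X p X p id" by (simp add: good_F_def)
  have "full X p n ?H"
  proof (rule full_transfer[OF gF])
    show "full X p n \<sigma>" using s by (simp add: gajer_def)
    show "\<forall>t\<in>standard_simplex n. \<forall>T. stratum X T \<and> 0 < codim X T \<and> ?H t \<in> T \<longrightarrow> \<sigma> t \<in> id T"
    proof (intro ballI allI impI)
      fix t T assume t: "t \<in> standard_simplex n" and T: "stratum X T \<and> 0 < codim X T \<and> ?H t \<in> T"
      obtain S where S: "stratum X S" "\<sigma> t \<in> S" using stratum_cover[OF X gajer_pt[OF s t]] by blast
      have "h (\<sigma> t, amap n \<alpha> t) \<in> S"
        using homotopy_stays[OF X h h1 S amap_in[OF t]] .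
      moreover have "h (\<sigma> t, amap n \<alpha> t) \<in> T" using T t by simp
      ultimately have "S = T" using stratum_disjoint[OF X S(1)] T by blast
      then show "\<sigma> t \<in> id T" using S by simp
    qed
  qed
  then show "?H \<in> gajer X p n" using ss by (simp add: gajer_def)
next
  fix n \<sigma> and \<alpha> \<beta> :: "nat \<Rightarrow> nat" assume "\<sigma> \<in> gajer X p n \<and> (\<forall>i\<le>n. \<alpha> i = \<beta> i)"
  then show "restrict (\<lambda>t. h (\<sigma> t, amap n \<alpha> t)) (standard_simplex n) =
             restrict (\<lambda>t. h (\<sigma> t, amap n \<beta> t)) (standard_simplex n)"
    using amap_cong[of n \<alpha> \<beta>] by simp
next
  fix m n \<theta> \<sigma> \<alpha> assume a: "simp_op m n \<theta> \<and> simp_op n 1 \<alpha> \<and> \<sigma> \<in> gajer X p n"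
  show "restrict (\<lambda>t. h (sop_act m \<theta> \<sigma> t, amap m (\<alpha> \<circ> \<theta>) t)) (standard_simplex m) =
        sop_act m \<theta> (restrict (\<lambda>t. h (\<sigma> t, amap n \<alpha> t)) (standard_simplex n))"
  proof
    fix t show "restrict (\<lambda>t. h (sop_act m \<theta> \<sigma> t, amap m (\<alpha> \<circ> \<theta>) t)) (standard_simplex m) t =
        sop_act m \<theta> (restrict (\<lambda>t. h (\<sigma> t, amap n \<alpha> t)) (standard_simplex n)) t"
      using simp_op_map_in[of m n \<theta> t] amap_comp[of m n \<theta> \<alpha> t] a
      by (simp add: sop_act_def)
  qed
next
  fix n \<sigma> assume s: "\<sigma> \<in> gajer X p n"
  show "restrict (\<lambda>t. h (\<sigma> t, amap n (\<lambda>_. 0) t)) (standard_simplex n) = \<Phi> n \<sigma>"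
  proof
    fix t show "restrict (\<lambda>t. h (\<sigma> t, amap n (\<lambda>_. 0) t)) (standard_simplex n) t = \<Phi> n \<sigma> t"
      using \<Phi> s h0 gajer_pt[OF s, of t] by (simp add: amap_0)
  qed
  show "restrict (\<lambda>t. h (\<sigma> t, amap n (\<lambda>_. 1) t)) (standard_simplex n) = \<sigma>"
  proof
    fix t show "restrict (\<lambda>t. h (\<sigma> t, amap n (\<lambda>_. 1) t)) (standard_simplex n) t = \<sigma> t"
      using h1 gajer_pt[OF s, of t] gajer_ext[OF s, of t] amap_1[of t n] by auto
  qed
qed


lemma ereal_minus_cancel:
  fixes x y :: ereal
  assumes "ereal a - x = ereal a - y" shows "x = y"
  using assms by (cases x; cases y) auto

lemma gajer_map_comp:
  "gajer_map g n (gajer_map f n \<sigma>) = restrict ((g \<circ> f) \<circ> \<sigma>) (standard_simplex n)"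
  by (rule ext) (simp add: gajer_map_def simplex_map_def)

theorem mainTheorem11:
  fixes X :: "'a filtered_space" and Y :: "'b filtered_space"
    and p :: "'a set \<Rightarrow> ereal" and q :: "'b set \<Rightarrow> ereal"
    and f :: "'a \<Rightarrow> 'b"
  assumes "filtered_space X" and "perversity X p"
    and "filtered_space Y" and "perversity Y q"
    and "stratified_homotopy_equivalence X Y f"
    and "\<forall>S. stratum X S \<longrightarrow>
           dual_perversity X p S = pullback_perversity Y f (dual_perversity Y q) S"
  shows "simplicial_homotopy_equivalence (gajer X p) (gajer Y q) (gajer_map f)"
proof -
  note X = assms(1) and Y = assms(3) and dual = assms(6)
  have fs: "stratified_map X Y f" using assms(5) by (simp add: stratified_homotopy_equivalence_def)
  obtain g where gs: "stratified_map Y X g" and hXe: "stratified_homotopic X X (g \<circ> f) id"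
    and hYe: "stratified_homotopic Y Y (f \<circ> g) id"
    and cX: "\<forall>S. stratum X S \<longrightarrow> codim X S = codim Y (target_stratum Y f S)"
    and cY: "\<forall>T. stratum Y T \<longrightarrow> codim Y T = codim X (target_stratum X g T)"
    using assms(5) unfolding stratified_homotopy_equivalence_def by blast
  obtain hX where hX: "stratified_map (cylinder X) X hX"
    "\<forall>x\<in>topspace (ftop X). hX (x, 0) = g (f x) \<and> hX (x, 1) = x"
    using hXe unfolding stratified_homotopic_def by auto
  obtain hY where hY: "stratified_map (cylinder Y) Y hY"
    "\<forall>y\<in>topspace (ftop Y). hY (y, 0) = f (g y) \<and> hY (y, 1) = y"
    using hYe unfolding stratified_homotopic_def by auto
  have hX1: "\<forall>x\<in>topspace (ftop X). hX (x, 1) = x" using hX(2) by blast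
  have hY1: "\<forall>y\<in>topspace (ftop Y). hY (y, 1) = y" using hY(2) by blast
  have gfS: "g (f x) \<in> S" if "stratum X S" "x \<in> S" for S x
  proof -
    have "hX (x, 0) \<in> S" using homotopy_stays[OF X hX(1) hX1 that] by simp
    moreover have "x \<in> topspace (ftop X)" using stratum_sub(1)[OF that(1)] that(2) by blast
    ultimately show ?thesis using hX(2) by simp
  qed
  have fgT: "f (g y) \<in> T" if "stratum Y T" "y \<in> T" for T y
  proof -
    have "hY (y, 0) \<in> T" using homotopy_stays[OF Y hY(1) hY1 that] by simp
    moreover have "y \<in> topspace (ftop Y)" using stratum_sub(1)[OF that(1)] that(2) by blast
    ultimately show ?thesis using hY(2) by simp
  qed
  have pq: "p S = q (target_stratum Y f S)" if S: "stratum X S" for S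
  proof -
    have "dual_perversity X p S = dual_perversity Y q (target_stratum Y f S)"
      using dual S by (simp add: pullback_perversity_def)
    then have "ereal (real_of_int (codim X S - 2)) - p S =
               ereal (real_of_int (codim X S - 2)) - q (target_stratum Y f S)"
      using cX S by (simp add: dual_perversity_def top_perversity_def)
    then show ?thesis by (rule ereal_minus_cancel)
  qed
  have fc: "continuous_map (ftop X) (ftop Y) f" using fs by (simp add: stratified_map_def)
  have gc: "continuous_map (ftop Y) (ftop X) g" using gs by (simp add: stratified_map_def)
  have gFa: "good_F X p Y q (target_stratum X g)"
    unfolding good_F_def
  proof (intro allI impI conjI)
    fix T assume T: "stratum Y T \<and> 0 < codim Y T"
    let ?S = "target_stratum X g T"
    show S: "stratum X ?S" using target_stratum_props(1)[OF X gs] T by blast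
    show "codim X ?S = codim Y T" using cY T by simp
    obtain y where y: "y \<in> T" using stratum_sub(2) T by blast
    have gy: "g y \<in> ?S" using target_stratum_props(2)[OF X gs] T y by blast
    have "f (g y) \<in> target_stratum Y f ?S" using target_stratum_props(2)[OF Y fs S] gy by blast
    moreover have "f (g y) \<in> T" using fgT T y by blast
    ultimately have "target_stratum Y f ?S = T"
      using stratum_disjoint[OF Y target_stratum_props(1)[OF Y fs S]] T by blast
    then show "p ?S \<le> q T" using pq[OF S] by simp
  qed
  have pwa: "\<forall>x\<in>topspace (ftop X). \<forall>T. stratum Y T \<and> codim Y T > 0 \<and> f x \<in> T \<longrightarrow> x \<in> target_stratum X g T"
  proof (intro ballI allI impI)
    fix x T assume x: "x \<in> topspace (ftop X)" and T: "stratum Y T \<and> codim Y T > 0 \<and> f x \<in> T"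
    obtain S where S: "stratum X S" "x \<in> S" using stratum_cover[OF X x] by blast
    have "g (f x) \<in> S" using gfS S by blast
    moreover have "g (f x) \<in> target_stratum X g T" using target_stratum_props(2)[OF X gs] T by blast
    ultimately have "S = target_stratum X g T"
      using stratum_disjoint[OF X S(1) target_stratum_props(1)[OF X gs]] T by blast
    then show "x \<in> target_stratum X g T" using S by simp
  qed
  have gFb: "good_F Y q X p (target_stratum Y f)"
    unfolding good_F_def
  proof (intro allI impI conjI)
    fix S assume S: "stratum X S \<and> 0 < codim X S"
    show "stratum Y (target_stratum Y f S)" using target_stratum_props(1)[OF Y fs] S by blast
    show "codim Y (target_stratum Y f S) = codim X S" using cX S by simp
    show "q (target_stratum Y f S) \<le> p S" using pq S by simp
  qed
  have pwb: "\<forall>y\<in>topspace (ftop Y). \<forall>S. stratum X S \<and> codim X S > 0 \<and> g y \<in> S \<longrightarrow> y \<in> target_stratum Y f S"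
  proof (intro ballI allI impI)
    fix y S assume y: "y \<in> topspace (ftop Y)" and S: "stratum X S \<and> codim X S > 0 \<and> g y \<in> S"
    obtain T where T: "stratum Y T" "y \<in> T" using stratum_cover[OF Y y] by blast
    have "f (g y) \<in> T" using fgT T by blast
    moreover have "f (g y) \<in> target_stratum Y f S" using target_stratum_props(2)[OF Y fs] S by blast
    ultimately have "T = target_stratum Y f S"
      using stratum_disjoint[OF Y T(1) target_stratum_props(1)[OF Y fs]] S by blast
    then show "y \<in> target_stratum Y f S" using T by simp
  qed
  have phi: "simplicial_map (gajer X p) (gajer Y q) (gajer_map f)"
    by (rule gajer_map_simplicial[OF fc gFa pwa])
  have psi: "simplicial_map (gajer Y q) (gajer X p) (gajer_map g)"
    by (rule gajer_map_simplicial[OF gc gFb pwb])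
  have H1: "elem_simplicial_homotopy (gajer X p) (gajer X p)
      (\<lambda>n \<sigma>. gajer_map g n (gajer_map f n \<sigma>)) (\<lambda>n \<sigma>. \<sigma>)"
    by (rule homotopy_elem[OF X hX(1), of "g \<circ> f"]) (use hX(2) in \<open>auto simp: gajer_map_comp\<close>)
  have H2: "elem_simplicial_homotopy (gajer Y q) (gajer Y q)
      (\<lambda>n \<sigma>. gajer_map f n (gajer_map g n \<sigma>)) (\<lambda>n \<sigma>. \<sigma>)"
    by (rule homotopy_elem[OF Y hY(1), of "f \<circ> g"]) (use hY(2) in \<open>auto simp: gajer_map_comp\<close>)
  show ?thesis unfolding simplicial_homotopy_equivalence_def
    using phi psi simplicially_homotopic.elem[OF H1] simplicially_homotopic.elem[OF H2] by blast
qed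

end
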